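(* Let $A\in\mathbb{R}^{n\times n}$, $B\in\mathbb{R}^{n\times m}$, $Q=Q^T\geqslant 0$, $R=R^T>0$, with $(A,B)$ controllable and $(A,\sqrt{Q})$ observable. Let $\widetilde{K}_0\in\mathbb{R}^{m\times n}$ be arbitrary, $c_0=1$, and $b>\rho(A-B\widetilde{K}_0)$. For $i=0,1,2,\ldots$, let $\widetilde{P}_i$ be the solution of $$\frac{\prod_{j=0}^i c_j^2}{b^2}(A-B\widetilde{K}_i)^T\widetilde{P}_i(A-B\widetilde{K}_i)-\widetilde{P}_i+Q+\widetilde{K}_i^TR\widetilde{K}_i=0,$$ let $\widetilde{K}_{i+1}=\big(B^T\widetilde{P}_iB+\frac{b^2}{\prod_{j=0}^i c_j^2}R\big)^{-1}B^T\widetilde{P}_iA$, set $\mathcal{Q}_i=\widetilde{P}_i-Q-\widetilde{K}_{i+1}^TR\widetilde{K}_{i+1}$, and let the scaling factor $c_{i+1}$ satisfy $$c_{i+1}=1\ \text{ if } \mathcal{Q}_i \text{ is non-invertible},\qquad 1<c_{i+1}<\sigma(\widetilde{P}_i\mathcal{Q}_i^{-1})^{1/2}\ \text{ if } \mathcal{Q}_i \text{ is invertible}.$$ Then, for each $i=0,1,2,\ldots$, with the gain $\widetilde{K}_{i+1}$ so obtained, the Lyapunov equation at step $i+1$, $$\frac{\prod_{j=0}^{i+1} c_j^2}{b^2}(A-B\widetilde{K}_{i+1})^T\widetilde{P}_{i+1}(A-B\widetilde{K}_{i+1})-\widetilde{P}_{i+1}+Q+\widetilde{K}_{i+1}^TR\widetilde{K}_{i+1}=0,$$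 has a unique positive definite solution $\widetilde{P}_{i+1}$.
   Context: $\rho(Y)$ is the spectral radius of a square matrix $Y$. $\sigma(Y)$ denotes the minimum singular value of $Y$ and $\sigma(Y)^{1/2}$ its square root. Positive definiteness refers to symmetric matrices. *)

theory Defs
  imports "HOL-Analysis.Analysis"
begin

primrec mpow :: "real^'n^'n \<Rightarrow> nat \<Rightarrow> real^'n^'n" where
  "mpow A 0 = mat 1"
| "mpow A (Suc k) = A ** mpow A k"

definition psd :: "real^'n^'n \<Rightarrow> bool" where
  "psd M \<longleftrightarrow> transpose M = M \<and> (\<forall>x. 0 \<le> x \<bullet> (M *v x))"

definition pos_def :: "real^'n^'n \<Rightarrow> bool" where
  "pos_def M \<longleftrightarrow> transpose M = M \<and> (\<forall>x. x \<noteq> 0 \<longrightarrow> 0 < x \<bullet> (M *v x))"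

definition msqrt :: "real^'n^'n \<Rightarrow> real^'n^'n" where
  "msqrt Q = (THE S. psd S \<and> S ** S = Q)"

definition cmat :: "real^'n^'m \<Rightarrow> complex^'n^'m" where
  "cmat A = (\<chi> i j. complex_of_real (A $ i $ j))"

definition spectral_radius :: "real^'n^'n \<Rightarrow> real" where
  "spectral_radius A = Max {cmod z | z. \<exists>v::complex^'n. v \<noteq> 0 \<and> cmat A *v v = z *s v}"

definition sigma_min :: "real^'n^'n \<Rightarrow> real" where
  "sigma_min Y = sqrt (Min {l. \<exists>x. x \<noteq> 0 \<and> (transpose Y ** Y) *v x = l *\<^sub>R x})"

definition controllable :: "real^'n^'n \<Rightarrow> real^'m^'n \<Rightarrow> bool" where
  "controllable A B \<longleftrightarrow>
     span (\<Union>k\<in>{..<CARD('n)}. range (\<lambda>u. (mpow A k ** B) *v u)) = UNIV"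

definition observable :: "real^'n^'n \<Rightarrow> real^'n^'p \<Rightarrow> bool" where
  "observable A C \<longleftrightarrow>
     (\<forall>x. (\<forall>k<CARD('n). (C ** mpow A k) *v x = 0) \<longrightarrow> x = 0)"

definition lyap_eq ::
  "real^'n^'n \<Rightarrow> real^'m^'n \<Rightarrow> real^'n^'n \<Rightarrow> real^'m^'m \<Rightarrow> real \<Rightarrow> (nat \<Rightarrow> real)
     \<Rightarrow> nat \<Rightarrow> real^'n^'m \<Rightarrow> real^'n^'n \<Rightarrow> bool" where
  "lyap_eq A B Q R b c i Ki X \<longleftrightarrow>
     ((\<Prod>j\<le>i. (c j)^2) / b^2) *\<^sub>R (transpose (A - B ** Ki) ** X ** (A - B ** Ki))
       - X + Q + transpose Ki ** R ** Ki = 0"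

end

theory Submission
  imports Defs "Jordan_Normal_Form.Spectral_Radius"
begin

no_notation Matrix.vec_index (infixl "$" 100)




lemma mpow_Suc': "mpow X (Suc k) = mpow X k ** X"
  by (induction k) (simp_all add: matrix_mul_assoc)

definition tojnf :: "(nat \<Rightarrow> 'n::finite) \<Rightarrow> real^'n^'n \<Rightarrow> complex Matrix.mat" where
  "tojnf f X = Matrix.mat CARD('n) CARD('n) (\<lambda>(i,j). complex_of_real (X $ f i $ f j))"

lemma tojnf_carrier: "tojnf f (X::real^'n::finite^'n) \<in> carrier_mat CARD('n) CARD('n)"
  unfolding tojnf_def by simp

lemma sum_reindex_f:
  assumes f: "bij_betw f {..<CARD('n)} (UNIV::'n::finite set)"
  shows "(\<Sum>l<CARD('n). h (f l)) = (\<Sum>a\<in>UNIV. h a)"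
  using sum.reindex_bij_betw[OF f, of h] by simp

lemma tojnf_mult:
  assumes f: "bij_betw f {..<CARD('n)} (UNIV::'n::finite set)"
  shows "tojnf f (X ** Y) = tojnf f X * tojnf f (Y::real^'n^'n)"
proof (rule eq_matI)
  fix i j assume i: "i < dim_row (tojnf f X * tojnf f Y)" and j: "j < dim_col (tojnf f X * tojnf f Y)"
  hence i': "i < CARD('n)" and j': "j < CARD('n)" by (simp_all add: tojnf_def)
  have "(tojnf f X * tojnf f Y) $$ (i,j) = (\<Sum>l<CARD('n). complex_of_real (X $ f i $ f l * Y $ f l $ f j))"
    using i' j' by (simp add: tojnf_def scalar_prod_def lessThan_atLeast0)
  also have "\<dots> = (\<Sum>a\<in>UNIV. complex_of_real (X $ f i $ a * Y $ a $ f j))"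
    by (rule sum_reindex_f[OF f])
  also have "\<dots> = tojnf f (X ** Y) $$ (i,j)"
    using i' j' by (simp add: tojnf_def matrix_matrix_mult_def)
  finally show "tojnf f (X ** Y) $$ (i,j) = (tojnf f X * tojnf f Y) $$ (i,j)" by simp
qed (simp_all add: tojnf_def)

lemma tojnf_one:
  assumes f: "bij_betw f {..<CARD('n)} (UNIV::'n::finite set)"
  shows "tojnf f (Finite_Cartesian_Product.mat 1 :: real^'n^'n) = 1\<^sub>m CARD('n)"
proof (rule eq_matI)
  fix i j assume "i < dim_row (1\<^sub>m CARD('n) :: complex Matrix.mat)" "j < dim_col (1\<^sub>m CARD('n) :: complex Matrix.mat)"
  hence i: "i < CARD('n)" and j: "j < CARD('n)" by auto
  have "f i = f j \<longleftrightarrow> i = j" using f i j unfolding bij_betw_def inj_on_def by auto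
  thus "tojnf f (Finite_Cartesian_Product.mat 1) $$ (i, j) = 1\<^sub>m CARD('n) $$ (i, j)"
    using i j by (simp add: tojnf_def Finite_Cartesian_Product.mat_def)
qed (simp_all add: tojnf_def)

lemma tojnf_pow:
  assumes f: "bij_betw f {..<CARD('n)} (UNIV::'n::finite set)"
  shows "tojnf f (mpow X k) = tojnf f (X::real^'n^'n) ^\<^sub>m k"
proof (induction k)
  case 0 thus ?case using tojnf_one[OF f] by (simp add: tojnf_def)
next
  case (Suc k) thus ?case by (simp only: mpow_Suc' tojnf_mult[OF f] pow_mat.simps)
qed

lemma tojnf_eig1:
  assumes f: "bij_betw f {..<CARD('n)} (UNIV::'n::finite set)"
    and ev: "eigenvalue (tojnf f (X::real^'n^'n)) z"
  shows "\<exists>v::complex^'n. v \<noteq> 0 \<and> cmat X *v v = z *s v"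
proof -
  let ?g = "inv_into {..<CARD('n)} f"
  have fg: "f (?g a) = a" for a using f by (simp add: bij_betw_inv_into_right)
  have gl: "?g a < CARD('n)" for a
  proof -
    have "?g a \<in> {..<CARD('n)}" using f by (intro inv_into_into) (auto simp: bij_betw_def)
    thus ?thesis by simp
  qed
  have gf: "i < CARD('n) \<Longrightarrow> ?g (f i) = i" for i using f bij_betw_inv_into_left by fastforce
  from ev obtain v where v: "v \<in> carrier_vec CARD('n)" "v \<noteq> 0\<^sub>v CARD('n)"
    "tojnf f X *\<^sub>v v = z \<cdot>\<^sub>v v"
    unfolding eigenvalue_def eigenvector_def by (auto simp: tojnf_def)
  define w where "w = (\<chi> a. vec_index v (?g a))"
  have "\<exists>l<CARD('n). vec_index v l \<noteq> 0"
  proof (rule ccontr)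
    assume "\<not> ?thesis"
    hence "v = 0\<^sub>v CARD('n)" using v(1) by (intro eq_vecI) auto
    thus False using v(2) by simp
  qed
  then obtain l where l: "l < CARD('n)" "vec_index v l \<noteq> 0" by auto
  have "w $ f l \<noteq> 0" using l gf by (simp add: w_def)
  hence "w \<noteq> 0" by auto
  moreover have "cmat X *v w = z *s w"
  proof (subst Finite_Cartesian_Product.vec_eq_iff, rule allI)
    fix a
    have "(cmat X *v w) $ a = (\<Sum>b\<in>UNIV. complex_of_real (X $ a $ b) * vec_index v (?g b))"
      by (simp add: cmat_def matrix_vector_mult_def w_def)
    also have "\<dots> = (\<Sum>l<CARD('n). complex_of_real (X $ f (?g a) $ f l) * vec_index v l)"
      unfolding fg using sum_reindex_f[OF f, of "\<lambda>b. complex_of_real (X $ a $ b) * vec_index v (?g b)"]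
      by (simp add: gf)
    also have "\<dots> = vec_index (tojnf f X *\<^sub>v v) (?g a)"
      using gl v(1) by (simp add: tojnf_def scalar_prod_def lessThan_atLeast0)
    also have "\<dots> = z * vec_index v (?g a)" using v(3) gl v(1) by simp
    finally show "(cmat X *v w) $ a = (z *s w) $ a" by (simp add: w_def)
  qed
  ultimately show ?thesis by blast
qed

lemma tojnf_eig2:
  assumes f: "bij_betw f {..<CARD('n)} (UNIV::'n::finite set)"
    and v: "v \<noteq> 0" "cmat X *v v = z *s v"
  shows "eigenvalue (tojnf f (X::real^'n^'n)) z"
proof -
  let ?g = "inv_into {..<CARD('n)} f"
  have fg: "f (?g a) = a" for a using f by (simp add: bij_betw_inv_into_right)
  have gl: "?g a < CARD('n)" for a
  proof -
    have "?g a \<in> {..<CARD('n)}" using f by (intro inv_into_into) (auto simp: bij_betw_def)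
    thus ?thesis by simp
  qed
  define u where "u = Matrix.vec CARD('n) (\<lambda>l. v $ f l)"
  from v(1) obtain a where a: "v $ a \<noteq> 0" by (auto simp: Finite_Cartesian_Product.vec_eq_iff)
  have "vec_index u (?g a) \<noteq> 0" using a gl fg by (simp add: u_def)
  hence "u \<noteq> 0\<^sub>v CARD('n)" using gl by (metis index_zero_vec(1))
  moreover have "tojnf f X *\<^sub>v u = z \<cdot>\<^sub>v u"
  proof (rule eq_vecI)
    fix i assume "i < dim_vec (z \<cdot>\<^sub>v u)"
    hence i: "i < CARD('n)" by (simp add: u_def)
    have "vec_index (tojnf f X *\<^sub>v u) i = (\<Sum>l<CARD('n). complex_of_real (X $ f i $ f l) * v $ f l)"
      using i by (simp add: tojnf_def u_def scalar_prod_def lessThan_atLeast0)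
    also have "\<dots> = (\<Sum>b\<in>UNIV. complex_of_real (X $ f i $ b) * v $ b)"
      by (rule sum_reindex_f[OF f])
    also have "\<dots> = (cmat X *v v) $ f i" by (simp add: cmat_def matrix_vector_mult_def)
    also have "\<dots> = z * v $ f i" using v(2) by simp
    finally show "vec_index (tojnf f X *\<^sub>v u) i = vec_index (z \<cdot>\<^sub>v u) i" using i by (simp add: u_def)
  qed (simp_all add: tojnf_def u_def)
  ultimately show ?thesis unfolding eigenvalue_def eigenvector_def
    by (intro exI[of _ u]) (simp add: tojnf_def u_def)
qed


lemma ex_bij_f: "\<exists>f. bij_betw f {..<CARD('n)} (UNIV::'n::finite set)"
proof -
  obtain h where "bij_betw h {0..<card (UNIV::'n set)} (UNIV::'n set)"
    using ex_bij_betw_nat_finite[of "UNIV::'n set"] by auto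
  thus ?thesis by (metis atLeast0LessThan)
qed

lemma eig_set_finite_nonempty:
  fixes N :: "real^'n::finite^'n"
  shows "finite {z. \<exists>v::complex^'n. v \<noteq> 0 \<and> cmat N *v v = z *s v}"
    "{z. \<exists>v::complex^'n. v \<noteq> 0 \<and> cmat N *v v = z *s v} \<noteq> {}"
proof -
  obtain f where f: "bij_betw f {..<CARD('n)} (UNIV::'n set)" using ex_bij_f by blast
  have "{z. \<exists>v::complex^'n. v \<noteq> 0 \<and> cmat N *v v = z *s v} \<subseteq> Spectral_Radius.spectrum (tojnf f N)"
    using tojnf_eig2[OF f] by (auto simp: Spectral_Radius.spectrum_def)
  thus "finite {z. \<exists>v::complex^'n. v \<noteq> 0 \<and> cmat N *v v = z *s v}"
    using card_finite_spectrum(1)[OF tojnf_carrier] finite_subset by blast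
  obtain z where "z \<in> Spectral_Radius.spectrum (tojnf f N)"
    using spectrum_non_empty[OF tojnf_carrier, of f N] by auto
  hence "eigenvalue (tojnf f N) z" by (simp add: Spectral_Radius.spectrum_def)
  from tojnf_eig1[OF f this]
  show "{z. \<exists>v::complex^'n. v \<noteq> 0 \<and> cmat N *v v = z *s v} \<noteq> {}" by blast
qed

lemma powers_bounded:
  fixes N :: "real^'n::finite^'n"
  assumes ev: "\<And>z v. v \<noteq> 0 \<Longrightarrow> cmat N *v v = z *s v \<Longrightarrow> cmod z < 1"
  shows "\<exists>C. \<forall>k a b. \<bar>mpow N k $ a $ b\<bar> \<le> C"
proof -
  obtain f where f: "bij_betw f {..<CARD('n)} (UNIV::'n set)" using ex_bij_f by blast
  let ?g = "inv_into {..<CARD('n)} f"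
  have fg: "f (?g a) = a" for a using f by (simp add: bij_betw_inv_into_right)
  have gl: "?g a < CARD('n)" for a
  proof -
    have "?g a \<in> {..<CARD('n)}" using f by (intro inv_into_into) (auto simp: bij_betw_def)
    thus ?thesis by simp
  qed
  let ?J = "tojnf f N"
  obtain z where z: "z \<in> Spectral_Radius.spectrum ?J" "Spectral_Radius.spectral_radius ?J = norm z"
    using spectral_radius_mem_max(1)[OF tojnf_carrier, of f N] by auto
  from z(1) have "eigenvalue ?J z" by (simp add: Spectral_Radius.spectrum_def)
  from tojnf_eig1[OF f this] ev have "Spectral_Radius.spectral_radius ?J < 1" using z(2) by auto
  from spectral_radius_jnf_norm_bound_less_1_upper_triangular[OF tojnf_carrier this]
  obtain C where C: "\<And>k. norm_bound (?J ^\<^sub>m k) C" by auto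
  have "\<bar>mpow N k $ a $ b\<bar> \<le> C" for k a b
  proof -
    have "norm ((?J ^\<^sub>m k) $$ (?g a, ?g b)) \<le> C"
      using C[of k] gl unfolding norm_bound_def by (simp add: tojnf_def)
    moreover have "(?J ^\<^sub>m k) $$ (?g a, ?g b) = complex_of_real (mpow N k $ a $ b)"
      unfolding tojnf_pow[OF f, symmetric] using gl fg by (simp add: tojnf_def)
    ultimately show ?thesis by simp
  qed
  thus ?thesis by blast
qed


lemma cmat_scale: "cmat (s *\<^sub>R G) *v v = complex_of_real s *s (cmat (G::real^'n::finite^'n) *v v)"
  by (simp add: cmat_def matrix_vector_mult_def Finite_Cartesian_Product.vec_eq_iff sum_distrib_left mult.assoc)

lemma mpow_scale: "mpow (s *\<^sub>R X) k = s ^ k *\<^sub>R mpow (X::real^'n::finite^'n) k"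
  by (induction k) (simp_all add: matrix_scalar_ac scalar_matrix_assoc[symmetric])

lemma base_stable_aux:
  fixes G :: "real^'n::finite^'n"
  assumes b: "b > Defs.spectral_radius G"
  shows "0 < b \<and> (\<forall>x. (\<lambda>k. mpow ((1/b) *\<^sub>R G) k *v x) \<longlonglongrightarrow> 0)"
proof -
  define E where "E = {z. \<exists>v::complex^'n. v \<noteq> 0 \<and> cmat G *v v = z *s v}"
  have finE: "finite E" and neE: "E \<noteq> {}" using eig_set_finite_nonempty[of G] by (simp_all add: E_def)
  have sr: "Defs.spectral_radius G = Max (cmod ` E)"
    unfolding Defs.spectral_radius_def E_def by (rule arg_cong[where f = Max]) auto
  define rho where "rho = Max (cmod ` E)"
  have rho_ge: "cmod z \<le> rho" if "z \<in> E" for z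
    unfolding rho_def using finE that by (intro Max_ge) auto
  obtain z0 where "z0 \<in> E" using neE by blast
  hence rho0: "0 \<le> rho" using rho_ge[of z0] norm_ge_zero[of z0] by linarith
  have brho: "rho < b" using b sr rho_def by simp
  hence b0: "0 < b" using rho0 by linarith
  define r where "r = (rho / b + 1) / 2"
  have r0: "0 < r" using rho0 b0 by (simp add: r_def add_nonneg_pos)
  have r1: "r < 1" using brho b0 by (simp add: r_def field_simps)
  have rb: "rho < r * b" using brho b0 by (simp add: r_def field_simps)
  define N where "N = (1 / (r * b)) *\<^sub>R G"
  have evN: "cmod z < 1" if v: "v \<noteq> 0" "cmat N *v v = z *s v" for z v
  proof -
    have "complex_of_real (1 / (r * b)) *s (cmat G *v v) = z *s v" using v(2) by (simp add: N_def cmat_scale)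
    hence "cmat G *v v = (complex_of_real (r * b) * z) *s v"
      using r0 b0 by (simp add: Finite_Cartesian_Product.vec_eq_iff field_simps)
    hence "complex_of_real (r * b) * z \<in> E" using v(1) by (auto simp: E_def)
    hence "cmod (complex_of_real (r * b) * z) \<le> rho" by (rule rho_ge)
    hence "r * b * cmod z \<le> rho" using r0 b0 by (simp add: norm_mult)
    hence "r * b * cmod z < r * b" using rb by linarith
    thus ?thesis using r0 b0 by simp
  qed
  obtain C where C: "\<And>k a b. \<bar>mpow N k $ a $ b\<bar> \<le> C" using powers_bounded[of N] evN by blast
  have MN: "(1/b) *\<^sub>R G = r *\<^sub>R N" using r0 b0 by (simp add: N_def)
  have "(\<lambda>k. mpow ((1/b) *\<^sub>R G) k *v x) \<longlonglongrightarrow> 0" for x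
  proof (rule vec_tendstoI)
    fix a
    define D where "D = (\<Sum>j\<in>UNIV. C * \<bar>x $ j\<bar>)"
    have bnd: "norm ((mpow ((1/b) *\<^sub>R G) k *v x) $ a) \<le> r ^ k * D" for k
    proof -
      have "(mpow ((1/b) *\<^sub>R G) k *v x) $ a = r ^ k * (\<Sum>j\<in>UNIV. mpow N k $ a $ j * x $ j)"
        unfolding MN mpow_scale by (simp add: matrix_vector_mult_def sum_distrib_left mult.assoc)
      also have "norm \<dots> \<le> r ^ k * D"
      proof -
        have "\<bar>\<Sum>j\<in>UNIV. mpow N k $ a $ j * x $ j\<bar> \<le> (\<Sum>j\<in>UNIV. \<bar>mpow N k $ a $ j * x $ j\<bar>)"
          by (rule sum_abs)
        also have "\<dots> \<le> D" unfolding D_def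
          by (intro sum_mono) (simp add: abs_mult C mult_right_mono)
        finally show ?thesis using r0 by (simp add: abs_mult mult_left_mono)
      qed
      finally show ?thesis .
    qed
    have "(\<lambda>k. r ^ k * D) \<longlonglongrightarrow> 0 * D"
      using r0 r1 by (intro tendsto_mult LIMSEQ_power_zero tendsto_const) simp
    hence "(\<lambda>k. r ^ k * D) \<longlonglongrightarrow> 0" by simp
    thus "(\<lambda>k. (mpow ((1/b) *\<^sub>R G) k *v x) $ a) \<longlonglongrightarrow> 0 $ a"
      using Lim_null_comparison[OF always_eventually[OF allI[OF bnd]]] by simp
  qed
  thus ?thesis using b0 by blast
qed


hide_const (open) Matrix.mat Spectral_Radius.spectral_radius VectorSpace.subspace Matrix.orthogonal
hide_fact (open) Matrix.vec_eq_iff Matrix.mat_def Matrix.orthogonal_def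
no_notation Matrix.scalar_prod (infix "\<bullet>" 70)



lemma scaleR_mat_vec: "(c *\<^sub>R (A::real^'n^'m)) *v x = c *\<^sub>R (A *v x)"
  by (simp add: matrix_vector_mult_def vec_eq_iff sum_distrib_left mult.assoc)

lemma tr_dot: "(transpose A *v x) \<bullet> y = x \<bullet> ((A::real^'n^'m) *v y)"
  by (simp add: dot_lmul_matrix)

lemma dot_tr: "x \<bullet> (transpose A *v y) = ((A::real^'n^'m) *v x) \<bullet> y"
  by (metis inner_commute tr_dot)

lemma sym_dot: "transpose M = M \<Longrightarrow> x \<bullet> (M *v y) = (M *v x) \<bullet> (y::real^'n)"
  by (metis dot_tr)

lemma qf_sandwich: "x \<bullet> ((transpose F ** X ** F) *v x) = (F *v x) \<bullet> (X *v (F *v (x::real^'n)))"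
  by (simp only: matrix_vector_mul_assoc[symmetric] dot_tr)

lemma kernel_lemma:
  fixes N :: "real^'n^'n"
  assumes sym: "transpose N = N" and V: "subspace V"
    and pos: "\<And>x. x \<in> V \<Longrightarrow> 0 \<le> x \<bullet> (N *v x)"
    and v: "v \<in> V" "N *v v \<in> V" "v \<bullet> (N *v v) = 0"
  shows "N *v v = 0"
proof (rule ccontr)
  assume ne: "N *v v \<noteq> 0"
  let ?w = "N *v v"
  let ?a = "?w \<bullet> (N *v ?w)"
  have a0: "0 \<le> ?a" using pos v(2) by blast
  have ww: "0 < ?w \<bullet> ?w" using ne by simp
  define t where "t = (?w \<bullet> ?w) / (?a + 1)"
  have t0: "0 < t" using ww a0 by (simp add: t_def)
  have "v - t *\<^sub>R ?w \<in> V" using V v by (simp add: subspace_diff subspace_scale)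
  hence "0 \<le> (v - t *\<^sub>R ?w) \<bullet> (N *v (v - t *\<^sub>R ?w))" by (rule pos)
  also have "\<dots> = v \<bullet> (N *v v) - t * (v \<bullet> (N *v ?w)) - t * (?w \<bullet> ?w) + t * t * ?a"
    by (simp add: matrix_vector_mult_diff_distrib matrix_vector_mult_scaleR inner_diff_left
        inner_diff_right algebra_simps)
  also have "v \<bullet> (N *v ?w) = ?w \<bullet> ?w" using sym_dot[OF sym] by simp
  finally have "0 \<le> t * (t * ?a - 2 * (?w \<bullet> ?w))" using v(3) by (simp add: algebra_simps)
  moreover have "t * ?a < 2 * (?w \<bullet> ?w)"
  proof -
    have "t * ?a = (?w \<bullet> ?w) * (?a / (?a + 1))" by (simp add: t_def)
    also have "\<dots> < (?w \<bullet> ?w) * 1" using ww a0 by (intro mult_strict_left_mono) auto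
    finally show ?thesis using ww by linarith
  qed
  ultimately show False using t0 mult_pos_neg[of t "t * ?a - 2 * (?w \<bullet> ?w)"] by linarith
qed

lemma mat_scaled_vec: "((l::real) *\<^sub>R mat 1) *v x = l *\<^sub>R (x::real^'n)"
  by (simp add: scaleR_mat_vec)

lemma rayleigh_sub:
  fixes M :: "real^'n^'n"
  assumes sym: "transpose M = M" and V: "subspace V" and inv: "\<And>x. x \<in> V \<Longrightarrow> M *v x \<in> V"
    and ne: "x0 \<in> V" "x0 \<noteq> 0"
  shows "\<exists>l v. v \<in> V \<and> norm v = 1 \<and> M *v v = l *\<^sub>R v \<and> (\<forall>x\<in>V. l * (x \<bullet> x) \<le> x \<bullet> (M *v x))"
proof -
  let ?S = "sphere 0 1 \<inter> V"
  have cS: "compact ?S" using closed_subspace[OF V] by (intro compact_Int_closed) auto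
  have "x0 /\<^sub>R norm x0 \<in> ?S" using ne V by (auto simp: subspace_scale)
  hence neS: "?S \<noteq> {}" by blast
  have cont: "continuous_on ?S (\<lambda>x. x \<bullet> (M *v x))"
    by (intro continuous_intros linear_continuous_on) auto
  obtain v where v: "v \<in> ?S" and vmin: "\<And>y. y \<in> ?S \<Longrightarrow> v \<bullet> (M *v v) \<le> y \<bullet> (M *v y)"
    using continuous_attains_inf[OF cS neS cont] by blast
  define l where "l = v \<bullet> (M *v v)"
  have lx: "l * (x \<bullet> x) \<le> x \<bullet> (M *v x)" if x: "x \<in> V" for x
  proof (cases "x = 0")
    case True thus ?thesis by simp
  next
    case False
    let ?y = "x /\<^sub>R norm x"
    have "?y \<in> ?S" using x False V by (auto simp: subspace_scale)
    hence "l \<le> ?y \<bullet> (M *v ?y)" using vmin l_def by blast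
    also have "\<dots> = (x \<bullet> (M *v x)) / (norm x)^2"
      by (simp add: matrix_vector_mult_scaleR power2_eq_square divide_inverse)
    finally have "l * (norm x)^2 \<le> x \<bullet> (M *v x)" using False by (simp add: field_simps)
    thus ?thesis by (simp add: power2_norm_eq_inner)
  qed
  let ?N = "M - l *\<^sub>R mat 1"
  have symN: "transpose ?N = ?N" using sym by (simp add: transpose_def vec_eq_iff mat_def)
  have qN: "x \<bullet> (?N *v x) = x \<bullet> (M *v x) - l * (x \<bullet> x)" for x
    by (simp add: matrix_vector_mult_diff_rdistrib mat_scaled_vec inner_diff_right)
  have vV: "v \<in> V" and vn: "norm v = 1" using v by auto
  have "?N *v v = 0"
  proof (rule kernel_lemma[OF symN V])
    show "\<And>x. x \<in> V \<Longrightarrow> 0 \<le> x \<bullet> (?N *v x)" using lx qN by simp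
    show "v \<in> V" by fact
    show "?N *v v \<in> V" using vV inv V
      by (simp add: matrix_vector_mult_diff_rdistrib mat_scaled_vec subspace_diff subspace_scale)
    have vv: "v \<bullet> v = 1" using vn by (simp add: power2_norm_eq_inner[symmetric])
    show "v \<bullet> (?N *v v) = 0" unfolding qN vv by (simp add: l_def)
  qed
  hence "M *v v = l *\<^sub>R v" by (simp add: matrix_vector_mult_diff_rdistrib mat_scaled_vec)
  thus ?thesis using vV vn lx by blast
qed

definition onb_eig :: "real^'n^'n \<Rightarrow> (real^'n) set \<Rightarrow> bool" where
  "onb_eig M B \<longleftrightarrow> finite B \<and> (\<forall>b\<in>B. norm b = 1 \<and> (\<exists>l. M *v b = l *\<^sub>R b)) \<and>
     (\<forall>b\<in>B. \<forall>b'\<in>B. b \<noteq> b' \<longrightarrow> b \<bullet> b' = 0)"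

lemma onb_eigD:
  assumes "onb_eig M B" "b \<in> B"
  shows "norm b = 1" "b \<bullet> b = 1" "\<exists>l. M *v b = l *\<^sub>R b" "\<And>b'. b' \<in> B \<Longrightarrow> b' \<noteq> b \<Longrightarrow> b' \<bullet> b = 0"
  using assms unfolding onb_eig_def by (auto simp: power2_norm_eq_inner[symmetric])

lemma onb_eig_indep: "onb_eig M B \<Longrightarrow> independent B"
  unfolding onb_eig_def
  by (intro pairwise_orthogonal_independent) (auto simp: pairwise_def orthogonal_def)

lemma spectral_aux:
  fixes M :: "real^'n^'n"
  assumes sym: "transpose M = M"
  shows "k \<le> CARD('n) \<Longrightarrow> \<exists>B. onb_eig M B \<and> card B = k"
proof (induction k)
  case 0 thus ?case by (intro exI[of _ "{}"]) (simp add: onb_eig_def)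
next
  case (Suc k)
  then obtain B where B: "onb_eig M B" "card B = k" by auto
  let ?V = "{y. \<forall>x\<in>B. orthogonal x y}"
  have V: "subspace ?V" by (rule subspace_orthogonal_to_vectors)
  have "dim B = k" using B dim_eq_card_independent[OF onb_eig_indep[OF B(1)]] by simp
  hence "dim B < DIM(real^'n)" using Suc.prems by simp
  then obtain x where x: "x \<noteq> 0" "\<And>y. y \<in> span B \<Longrightarrow> orthogonal x y"
    using orthogonal_to_subspace_exists[OF \<open>dim B < DIM(real^'n)\<close>] by blast
  have xV: "x \<in> ?V" using x(2) span_base by (auto simp: orthogonal_commute)
  have inv: "M *v y \<in> ?V" if y: "y \<in> ?V" for y
  proof -
    have "orthogonal b (M *v y)" if b: "b \<in> B" for b
    proof -
      obtain l where l: "M *v b = l *\<^sub>R b" using B(1) b unfolding onb_eig_def by blast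
      have "b \<bullet> (M *v y) = (M *v b) \<bullet> y" by (rule sym_dot[OF sym])
      also have "\<dots> = 0" using l y b by (simp add: orthogonal_def)
      finally show ?thesis by (simp add: orthogonal_def)
    qed
    thus ?thesis by simp
  qed
  obtain l v where v: "v \<in> ?V" "norm v = 1" "M *v v = l *\<^sub>R v"
    using rayleigh_sub[OF sym V inv xV x(1)] by blast
  have vB: "v \<notin> B"
  proof
    assume "v \<in> B"
    hence "v \<bullet> v = 0" using v(1) by (simp add: orthogonal_def)
    thus False using v(2) by simp
  qed
  have "onb_eig M (insert v B)"
    using B(1) v vB unfolding onb_eig_def
    by (auto simp: orthogonal_def inner_commute)
  moreover have "card (insert v B) = Suc k" using B vB by (simp add: onb_eig_def)
  ultimately show ?case by blast
qed

lemma spectral: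
  fixes M :: "real^'n^'n"
  assumes sym: "transpose M = M"
  shows "\<exists>B. onb_eig M B \<and> span B = UNIV"
proof -
  obtain B where B: "onb_eig M B" "card B = CARD('n)" using spectral_aux[OF sym, of "CARD('n)"] by auto
  have "independent B" by (rule onb_eig_indep[OF B(1)])
  moreover have "card B = dim (UNIV :: (real^'n) set)" using B(2) by simp
  ultimately have "UNIV \<subseteq> span B" using card_eq_dim[of B UNIV] B(1) by (simp add: onb_eig_def)
  thus ?thesis using B(1) by blast
qed

lemma mat_eq_on_span:
  fixes A C :: "real^'n^'m"
  assumes sp: "span B = UNIV" and eq: "\<And>b. b \<in> B \<Longrightarrow> A *v b = C *v b"
  shows "A = C"
proof -
  have "A *v x = C *v x" for x
  proof -
    have "x \<in> span B" using sp by simp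
    thus ?thesis using linear_eq_on_span[OF matrix_vector_mul_linear matrix_vector_mul_linear, of B] eq
      by blast
  qed
  thus ?thesis by (simp add: matrix_eq)
qed

definition outer :: "real^'n \<Rightarrow> real^'n^'n" where
  "outer b = (\<chi> i j. b $ i * b $ j)"

lemma outer_vec: "outer b *v x = (b \<bullet> x) *\<^sub>R b"
  by (simp add: outer_def matrix_vector_mult_def vec_eq_iff inner_vec_def sum_distrib_left mult_ac)

lemma sum_mat_vec: "(sum f B) *v x = (\<Sum>b\<in>B. f b *v (x::real^'n))"
  by (induction B rule: infinite_finite_induct) (simp_all add: matrix_vector_mult_add_rdistrib)

lemma psd_sqrt_vec:
  fixes T :: "real^'n^'n"
  assumes T: "psd T" and mu: "0 \<le> mu" and eq: "T *v (T *v v) = (mu^2) *\<^sub>R v"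
  shows "T *v v = mu *\<^sub>R v"
proof (cases "mu = 0")
  case True
  have symT: "transpose T = T" using T by (simp add: psd_def)
  have "(T *v v) \<bullet> (T *v v) = v \<bullet> (T *v (T *v v))" using sym_dot[OF symT] by simp
  also have "\<dots> = 0" using eq True by simp
  finally show ?thesis using True by simp
next
  case False
  let ?u = "T *v v - mu *\<^sub>R v"
  have "T *v ?u + mu *\<^sub>R ?u = 0"
    using eq by (simp add: matrix_vector_mult_diff_distrib matrix_vector_mult_scaleR algebra_simps power2_eq_square)
  hence "?u \<bullet> (T *v ?u) + mu * (?u \<bullet> ?u) = 0"
    by (metis inner_add_right inner_scaleR_right inner_zero_right)
  moreover have "0 \<le> ?u \<bullet> (T *v ?u)" using T by (simp add: psd_def)
  moreover have "0 \<le> ?u \<bullet> ?u" by simp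
  moreover have "0 \<le> mu * (?u \<bullet> ?u)" using mu by simp
  ultimately have "mu * (?u \<bullet> ?u) = 0" by linarith
  hence "?u = 0" using False by simp
  thus ?thesis by simp
qed

lemma psd_sqrt_ex1:
  fixes Q :: "real^'n^'n"
  assumes Q: "psd Q"
  shows "\<exists>!S. psd S \<and> S ** S = Q"
proof -
  have symQ: "transpose Q = Q" using Q by (simp add: psd_def)
  obtain B where B: "onb_eig Q B" "span B = UNIV" using spectral[OF symQ] by blast
  have finB: "finite B" using B(1) by (simp add: onb_eig_def)
  define lam where "lam b = b \<bullet> (Q *v b)" for b
  have lam0: "0 \<le> lam b" for b using Q by (simp add: psd_def lam_def)
  have Qb: "Q *v b = lam b *\<^sub>R b" if bB: "b \<in> B" for b
  proof -
    obtain l where l: "Q *v b = l *\<^sub>R b" using onb_eigD(3)[OF B(1) bB] by blast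
    have "b \<bullet> b = 1" using onb_eigD(2)[OF B(1) bB] .
    hence "lam b = l" using l by (simp add: lam_def)
    thus ?thesis using l by simp
  qed
  define S where "S = (\<Sum>b\<in>B. sqrt (lam b) *\<^sub>R outer b)"
  have Sx: "S *v x = (\<Sum>b\<in>B. (sqrt (lam b) * (b \<bullet> x)) *\<^sub>R b)" for x
    unfolding S_def sum_mat_vec by (simp add: scaleR_mat_vec outer_vec)
  have Sb: "S *v b0 = sqrt (lam b0) *\<^sub>R b0" if b0: "b0 \<in> B" for b0
  proof -
    have "S *v b0 = (\<Sum>b\<in>B. if b = b0 then sqrt (lam b0) *\<^sub>R b0 else 0)"
      unfolding Sx
    proof (rule sum.cong[OF refl])
      fix b assume b: "b \<in> B"
      show "(sqrt (lam b) * (b \<bullet> b0)) *\<^sub>R b = (if b = b0 then sqrt (lam b0) *\<^sub>R b0 else 0)"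
      proof (cases "b = b0")
        case True
        have "b0 \<bullet> b0 = 1" using onb_eigD(2)[OF B(1) b0] .
        thus ?thesis using True by simp
      next
        case False
        hence "b \<bullet> b0 = 0" using onb_eigD(4)[OF B(1) b0 b] by blast
        thus ?thesis using False by simp
      qed
    qed
    also have "\<dots> = sqrt (lam b0) *\<^sub>R b0" using b0 finB by (simp add: sum.delta')
    finally show ?thesis .
  qed
  have symS: "transpose S = S"
    by (simp add: S_def vec_eq_iff transpose_def outer_def mult.commute)
  have psdS: "psd S"
    unfolding psd_def
  proof (intro conjI allI symS)
    fix x
    have "x \<bullet> (S *v x) = (\<Sum>b\<in>B. sqrt (lam b) * (b \<bullet> x)^2)"
      unfolding Sx by (simp add: inner_sum_right inner_commute power2_eq_square mult.assoc)
    also have "\<dots> \<ge> 0" using lam0 by (intro sum_nonneg) simp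
    finally show "0 \<le> x \<bullet> (S *v x)" .
  qed
  have SS: "S ** S = Q"
  proof (rule mat_eq_on_span[OF B(2)])
    fix b assume b: "b \<in> B"
    have "(S ** S) *v b = S *v (S *v b)" by (simp add: matrix_vector_mul_assoc)
    also have "\<dots> = lam b *\<^sub>R b" using b lam0[of b] by (simp add: Sb matrix_vector_mult_scaleR)
    also have "\<dots> = Q *v b" using Qb b by simp
    finally show "(S ** S) *v b = Q *v b" .
  qed
  have uniq: "T = S" if T: "psd T" "T ** T = Q" for T
  proof (rule mat_eq_on_span[OF B(2)])
    fix b assume b: "b \<in> B"
    have "T *v (T *v b) = (sqrt (lam b))^2 *\<^sub>R b"
      using T(2) Qb[OF b] lam0[of b] by (simp add: matrix_vector_mul_assoc)
    hence "T *v b = sqrt (lam b) *\<^sub>R b" by (rule psd_sqrt_vec[OF T(1) real_sqrt_ge_zero[OF lam0]])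
    thus "T *v b = S *v b" using Sb[OF b] by simp
  qed
  show ?thesis using psdS SS uniq by blast
qed

lemma msqrt_props:
  assumes Q: "psd Q"
  shows "psd (msqrt Q)" "msqrt Q ** msqrt Q = Q"
  using theI'[OF psd_sqrt_ex1[OF Q]] unfolding msqrt_def by auto

lemma msqrt_kernel:
  assumes Q: "psd Q" and x: "x \<bullet> (Q *v x) = 0"
  shows "msqrt Q *v x = 0"
proof -
  let ?S = "msqrt Q"
  have sym: "transpose ?S = ?S" using msqrt_props(1)[OF Q] by (simp add: psd_def)
  have "(?S *v x) \<bullet> (?S *v x) = x \<bullet> (?S *v (?S *v x))" using sym_dot[OF sym] by simp
  also have "\<dots> = x \<bullet> (Q *v x)" using msqrt_props(2)[OF Q] by (simp add: matrix_vector_mul_assoc)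
  finally show ?thesis using x by simp
qed



lemma matrix_inv_props:
  assumes "invertible (A::real^'n^'n)"
  shows "A ** matrix_inv A = mat 1" "matrix_inv A ** A = mat 1"
  using someI_ex[OF assms[unfolded invertible_def]] unfolding matrix_inv_def by auto

lemma matrix_add_rdistrib': "((B::real^'n^'m) + C) ** A = B ** A + C ** A"
  by (simp add: matrix_matrix_mult_def vec_eq_iff sum.distrib distrib_right)

lemma matrix_diff_rdistrib': "((B::real^'n^'m) - C) ** A = B ** A - C ** A"
  by (simp add: matrix_matrix_mult_def vec_eq_iff sum_subtractf left_diff_distrib)

lemma matrix_diff_ldistrib': "(A::real^'n^'m) ** (B - C) = A ** B - A ** C"
  by (simp add: matrix_matrix_mult_def vec_eq_iff sum_subtractf right_diff_distrib)

lemma transpose_add': "transpose ((A::real^'n^'m) + B) = transpose A + transpose B"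
  by (simp add: transpose_def vec_eq_iff)

lemma transpose_diff': "transpose ((A::real^'n^'m) - B) = transpose A - transpose B"
  by (simp add: transpose_def vec_eq_iff)

lemma eig_finite_sym:
  fixes Y :: "real^'n^'n"
  assumes sym: "transpose Y = Y"
  shows "finite {l. \<exists>x. x \<noteq> 0 \<and> Y *v x = l *\<^sub>R x}"
proof -
  define E where "E = {l. \<exists>x. x \<noteq> 0 \<and> Y *v x = l *\<^sub>R x}"
  define f where "f l = (SOME x. x \<noteq> 0 \<and> Y *v x = l *\<^sub>R x)" for l
  have f: "f l \<noteq> 0 \<and> Y *v f l = l *\<^sub>R f l" if "l \<in> E" for l
  proof -
    have "\<exists>x. x \<noteq> 0 \<and> Y *v x = l *\<^sub>R x" using that by (simp add: E_def)
    from someI_ex[OF this] show ?thesis by (simp add: f_def)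
  qed
  have inj: "inj_on f E"
  proof (rule inj_onI)
    fix l1 l2 assume l: "l1 \<in> E" "l2 \<in> E" "f l1 = f l2"
    have "l1 *\<^sub>R f l1 = Y *v f l1" using f[OF l(1)] by simp
    also have "\<dots> = Y *v f l2" using l(3) by (rule arg_cong)
    also have "\<dots> = l2 *\<^sub>R f l2" using f[OF l(2)] by simp
    finally have "l1 *\<^sub>R f l1 = l2 *\<^sub>R f l1" using l(3) by simp
    thus "l1 = l2" using f[OF l(1)] scaleR_cancel_right by blast
  qed
  have orth: "pairwise orthogonal (f ` E)"
    unfolding pairwise_def
  proof (intro ballI impI)
    fix u w assume u: "u \<in> f ` E" and w: "w \<in> f ` E" and uw: "u \<noteq> w"
    obtain l1 where l1: "l1 \<in> E" "u = f l1" using u by blast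
    obtain l2 where l2: "l2 \<in> E" "w = f l2" using w by blast
    have ne: "l1 \<noteq> l2" using uw l1 l2 by blast
    have "l1 * (u \<bullet> w) = (Y *v u) \<bullet> w" using f[OF l1(1)] l1(2) by simp
    also have "\<dots> = u \<bullet> (Y *v w)" using sym_dot[OF sym] by simp
    also have "\<dots> = l2 * (u \<bullet> w)" using f[OF l2(1)] l2(2) by simp
    finally have "(l1 - l2) * (u \<bullet> w) = 0" by (simp add: algebra_simps)
    thus "orthogonal u w" using ne by (simp add: orthogonal_def)
  qed
  have "0 \<notin> f ` E"
  proof
    assume "0 \<in> f ` E"
    then obtain l where "l \<in> E" "f l = 0" by (metis imageE)
    thus False using f by blast
  qed
  hence "independent (f ` E)" using orth by (intro pairwise_orthogonal_independent)
  hence "finite (f ` E)" by (rule conjunct1[OF independent_bound])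
  hence "finite E" by (rule finite_imageD[OF _ inj])
  thus ?thesis by (simp add: E_def)
qed

definition mstable :: "real^'n^'n \<Rightarrow> bool" where
  "mstable F \<longleftrightarrow> (\<forall>x. (\<lambda>k. mpow F k *v x) \<longlonglongrightarrow> 0)"

lemma sandwich2: "x \<bullet> ((transpose F ** X ** G) *v y) = (F *v x) \<bullet> (X *v (G *v (y::real^'n)))"
  by (simp only: matrix_vector_mul_assoc[symmetric] dot_tr)

lemma mpow_add: "mpow F (a + b) = mpow F a ** mpow F b"
  by (induction a) (simp_all add: matrix_mul_assoc)

definition lyapL :: "real^'n^'n \<Rightarrow> real^'n^'n \<Rightarrow> real^'n^'n" where
  "lyapL F X = X - transpose F ** X ** F"

lemma lyapL_linear: "linear (lyapL (F::real^'n^'n))"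
proof (rule linearI)
  fix X Y :: "real^'n^'n" and c :: real
  show "lyapL F (X + Y) = lyapL F X + lyapL F Y"
    by (simp add: lyapL_def matrix_add_ldistrib matrix_add_rdistrib')
  show "lyapL F (c *\<^sub>R X) = c *\<^sub>R lyapL F X"
    by (simp add: lyapL_def matrix_scalar_ac scalar_matrix_assoc scaleR_diff_right)
qed

lemma lyapL_transpose: "lyapL F (transpose X) = transpose (lyapL F X)"
  by (simp add: lyapL_def transpose_diff' matrix_transpose_mul matrix_mul_assoc)

lemma lyap_uniq0:
  assumes st: "mstable F" and D: "lyapL F D = 0"
  shows "D = 0"
proof -
  have D': "transpose F ** D ** F = D" using D by (simp add: lyapL_def)
  have Dk: "transpose (mpow F k) ** D ** mpow F k = D" for k
  proof (induction k)
    case 0 thus ?case by simp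
  next
    case (Suc k)
    have "transpose (mpow F (Suc k)) ** D ** mpow F (Suc k)
        = transpose (mpow F k) ** (transpose F ** D ** F) ** mpow F k"
      by (simp add: matrix_transpose_mul matrix_mul_assoc)
    thus ?case using D' Suc by simp
  qed
  have "x \<bullet> (D *v y) = 0" for x y
  proof -
    have c: "(mpow F k *v x) \<bullet> (D *v (mpow F k *v y)) = x \<bullet> (D *v y)" for k
      using sandwich2[of x "mpow F k" D "mpow F k" y] Dk[of k] by simp
    have "(\<lambda>k. (mpow F k *v x) \<bullet> (D *v (mpow F k *v y))) \<longlonglongrightarrow> 0 \<bullet> (D *v 0)"
      using st unfolding mstable_def
      by (intro tendsto_inner bounded_linear.tendsto[OF matrix_vector_mul_bounded_linear]) auto
    hence "(\<lambda>k. x \<bullet> (D *v y)) \<longlonglongrightarrow> 0" unfolding c by simp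
    thus ?thesis by (simp add: LIMSEQ_const_iff)
  qed
  hence "D *v y = 0" for y by (metis inner_eq_zero_iff)
  thus ?thesis by (simp add: matrix_eq)
qed

lemma lyap_exists:
  assumes st: "mstable F"
  shows "\<exists>X. lyapL F X = W"
proof -
  have "inj (lyapL F)"
  proof (rule injI)
    fix X Y assume "lyapL F X = lyapL F Y"
    moreover have "lyapL F (X - Y) = lyapL F X - lyapL F Y" by (rule linear_diff[OF lyapL_linear])
    ultimately have "lyapL F (X - Y) = 0" by simp
    hence "X - Y = 0" by (rule lyap_uniq0[OF st])
    thus "X = Y" by simp
  qed
  hence "surj (lyapL F)" using linear_injective_imp_surjective[OF lyapL_linear] by blast
  thus ?thesis by (metis surjD)
qed

lemma lyap_qf_sum:
  assumes X: "lyapL F X = W"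
  shows "x \<bullet> (X *v x) = (\<Sum>k<N. (mpow F k *v x) \<bullet> (W *v (mpow F k *v x)))
            + (mpow F N *v x) \<bullet> (X *v (mpow F N *v x))"
proof (induction N)
  case 0 thus ?case by simp
next
  case (Suc N)
  let ?y = "mpow F N *v x"
  have XW: "X = W + transpose F ** X ** F" using X by (simp add: lyapL_def algebra_simps)
  have "?y \<bullet> (X *v ?y) = ?y \<bullet> (W *v ?y) + ?y \<bullet> ((transpose F ** X ** F) *v ?y)"
    by (subst XW) (simp add: matrix_vector_mult_add_rdistrib inner_add_right)
  also have "?y \<bullet> ((transpose F ** X ** F) *v ?y) = (mpow F (Suc N) *v x) \<bullet> (X *v (mpow F (Suc N) *v x))"
    unfolding sandwich2 by (simp add: matrix_vector_mul_assoc)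
  finally show ?case using Suc by simp
qed

lemma lyap_posdef:
  assumes st: "mstable F" and W: "psd W" and X: "lyapL F X = W"
    and obs: "\<And>x. (\<forall>k<CARD('n). (mpow F k *v x) \<bullet> (W *v (mpow F k *v x)) = 0) \<Longrightarrow> x = 0"
  shows "pos_def (X::real^'n^'n)"
proof -
  have symW: "transpose W = W" using W by (simp add: psd_def)
  have "lyapL F (transpose X) = W" using X symW by (simp add: lyapL_transpose)
  moreover have "lyapL F (transpose X - X) = lyapL F (transpose X) - lyapL F X" by (rule linear_diff[OF lyapL_linear])
  ultimately have "lyapL F (transpose X - X) = 0" using X by simp
  hence "transpose X - X = 0" by (rule lyap_uniq0[OF st])
  hence symX: "transpose X = X" by simp
  let ?q = "\<lambda>k x. (mpow F k *v x) \<bullet> (W *v (mpow F k *v x))"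
  have q0: "0 \<le> ?q k x" for k x using W by (simp add: psd_def)
  have lb: "(\<Sum>k<CARD('n). ?q k x) \<le> x \<bullet> (X *v x)" for x
  proof -
    let ?t = "\<lambda>m. (mpow F m *v x) \<bullet> (X *v (mpow F m *v x))"
    have "(\<lambda>m. ?t m) \<longlonglongrightarrow> 0 \<bullet> (X *v 0)"
      using st unfolding mstable_def
      by (intro tendsto_inner bounded_linear.tendsto[OF matrix_vector_mul_bounded_linear]) auto
    hence tl: "(\<lambda>m. x \<bullet> (X *v x) - ?t m) \<longlonglongrightarrow> x \<bullet> (X *v x) - 0"
      by (intro tendsto_diff tendsto_const) simp
    have ev: "\<exists>N. \<forall>m\<ge>N. (\<Sum>k<CARD('n). ?q k x) \<le> x \<bullet> (X *v x) - ?t m"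
    proof (intro exI[of _ "CARD('n)"] allI impI)
      fix m assume m: "CARD('n) \<le> m"
      have "(\<Sum>k<CARD('n). ?q k x) \<le> (\<Sum>k<m. ?q k x)"
        using m q0 by (intro sum_mono2) auto
      also have "\<dots> = x \<bullet> (X *v x) - ?t m" using lyap_qf_sum[OF X, of x m] by simp
      finally show "(\<Sum>k<CARD('n). ?q k x) \<le> x \<bullet> (X *v x) - ?t m" .
    qed
    have "(\<Sum>k<CARD('n). ?q k x) \<le> x \<bullet> (X *v x) - 0" by (rule LIMSEQ_le_const[OF tl ev])
    thus ?thesis by simp
  qed
  have "0 < x \<bullet> (X *v x)" if x: "x \<noteq> 0" for x
  proof -
    obtain k where k: "k < CARD('n)" "?q k x \<noteq> 0" using obs x by blast
    have "0 < ?q k x" using k(2) q0[of k x] by simp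
    also have "\<dots> \<le> (\<Sum>k<CARD('n). ?q k x)" using k(1) q0 by (intro member_le_sum) auto
    finally show ?thesis using lb[of x] by simp
  qed
  thus ?thesis using symX by (simp add: pos_def_def)
qed



lemma div_filterlim: "0 < (N::nat) \<Longrightarrow> filterlim (\<lambda>k. k div N) sequentially sequentially"
  unfolding filterlim_at_top
proof (intro allI eventually_sequentiallyI)
  fix Z k assume N: "0 < N" and k: "Z * N \<le> k"
  have "Z = (Z * N) div N" using N by simp
  also have "\<dots> \<le> k div N" using k by (rule div_le_mono)
  finally show "Z \<le> k div N" .
qed

lemma pos_def_nonneg: "pos_def P \<Longrightarrow> 0 \<le> x \<bullet> (P *v x)"
  unfolding pos_def_def by (cases "x = 0") (auto intro: less_imp_le)

lemma pos_def_lower: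
  fixes P :: "real^'n^'n"
  assumes P: "pos_def P"
  shows "\<exists>d>0. \<forall>x. d * (x \<bullet> x) \<le> x \<bullet> (P *v x)"
proof -
  have symP: "transpose P = P" using P by (simp add: pos_def_def)
  obtain x0 :: "real^'n" where x0: "norm x0 = 1" using vector_choose_size[of 1] by auto
  hence "x0 \<noteq> 0" by auto
  then obtain l v where lv: "norm v = 1" "P *v v = l *\<^sub>R v" "\<forall>x. l * (x \<bullet> x) \<le> x \<bullet> (P *v x)"
    using rayleigh_sub[OF symP subspace_UNIV, of x0] by auto
  have "v \<noteq> 0" using lv(1) by auto
  hence "0 < v \<bullet> (P *v v)" using P by (simp add: pos_def_def)
  also have "v \<bullet> (P *v v) = l" using lv(1,2) by (simp add: power2_norm_eq_inner[symmetric])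
  finally show ?thesis using lv(3) by blast
qed

lemma psd_upper:
  fixes P :: "real^'n^'n"
  shows "\<exists>m>0. \<forall>x. x \<bullet> (P *v x) \<le> m * (x \<bullet> x)"
proof -
  have "bounded_linear ((*v) P)" by simp
  then obtain K where K: "K > 0" "\<And>x. norm (P *v x) \<le> norm x * K"
    using bounded_linear.pos_bounded by blast
  have "x \<bullet> (P *v x) \<le> K * (x \<bullet> x)" for x
  proof -
    have "x \<bullet> (P *v x) \<le> norm x * norm (P *v x)" by (rule norm_cauchy_schwarz)
    also have "\<dots> \<le> norm x * (norm x * K)" using K(2) by (intro mult_left_mono) auto
    also have "\<dots> = K * (x \<bullet> x)" by (simp add: power2_norm_eq_inner[symmetric] power2_eq_square)
    finally show ?thesis .
  qed
  thus ?thesis using K(1) by blast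
qed

lemma stable_decay:
  fixes F P :: "real^'n^'n"
  assumes P: "pos_def P"
    and mono: "\<And>x. (F *v x) \<bullet> (P *v (F *v x)) \<le> x \<bullet> (P *v x)"
    and N: "0 < N" and rho: "rho < 1"
    and dec: "\<And>x. (mpow F N *v x) \<bullet> (P *v (mpow F N *v x)) \<le> rho * (x \<bullet> (P *v x))"
  shows "mstable F"
  unfolding mstable_def
proof
  fix x :: "real^'n"
  let ?V = "\<lambda>y. y \<bullet> (P *v y)"
  define r where "r = max rho 0"
  have r: "0 \<le> r" "r < 1" using rho by (auto simp: r_def)
  obtain d where d: "d > 0" "\<And>y. d * (y \<bullet> y) \<le> ?V y" using pos_def_lower[OF P] by blast
  have V0: "0 \<le> ?V y" for y using pos_def_nonneg[OF P] .
  have monok: "?V (mpow F (d' + m) *v x) \<le> ?V (mpow F m *v x)" for d' m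
  proof (induction d')
    case 0 thus ?case by simp
  next
    case (Suc d')
    have "mpow F (Suc d' + m) *v x = F *v (mpow F (d' + m) *v x)"
      by (simp add: matrix_vector_mul_assoc)
    hence "?V (mpow F (Suc d' + m) *v x) \<le> ?V (mpow F (d' + m) *v x)" using mono by simp
    thus ?case using Suc by linarith
  qed
  have geo: "?V (mpow F (N * j) *v x) \<le> r ^ j * ?V x" for j
  proof (induction j)
    case 0 thus ?case by simp
  next
    case (Suc j)
    let ?y = "mpow F (N * j) *v x"
    have "mpow F (N * Suc j) *v x = mpow F N *v ?y"
      by (simp add: mpow_add matrix_vector_mul_assoc)
    hence "?V (mpow F (N * Suc j) *v x) \<le> rho * ?V ?y" using dec by simp
    also have "\<dots> \<le> r * ?V ?y" using V0[of ?y] by (intro mult_right_mono) (auto simp: r_def)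
    also have "\<dots> \<le> r * (r ^ j * ?V x)" using Suc r(1) by (intro mult_left_mono) auto
    finally show ?case by simp
  qed
  have bnd: "norm (mpow F k *v x) \<le> sqrt (r ^ (k div N) * ?V x / d)" for k
  proof -
    let ?y = "mpow F k *v x"
    have kk: "k = (k - N * (k div N)) + N * (k div N)"
      by (metis add.commute le_add_diff_inverse mult.commute div_times_less_eq_dividend)
    have "d * (norm ?y)^2 \<le> ?V ?y" using d(2)[of ?y] by (simp add: power2_norm_eq_inner)
    also have "\<dots> \<le> ?V (mpow F (N * (k div N)) *v x)" using monok[of "k - N * (k div N)" "N * (k div N)"] kk by simp
    also have "\<dots> \<le> r ^ (k div N) * ?V x" by (rule geo)
    finally have "(norm ?y)^2 \<le> r ^ (k div N) * ?V x / d" using d(1) by (simp add: field_simps)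
    thus ?thesis by (simp add: real_le_rsqrt)
  qed
  have lim: "(\<lambda>k. sqrt (r ^ (k div N) * ?V x / d)) \<longlonglongrightarrow> 0"
  proof -
    have "(\<lambda>j. r ^ j) \<longlonglongrightarrow> 0" using r by (intro LIMSEQ_power_zero) auto
    hence "(\<lambda>k. r ^ (k div N)) \<longlonglongrightarrow> 0" by (rule filterlim_compose[OF _ div_filterlim[OF N]])
    hence "(\<lambda>k. sqrt (r ^ (k div N) * ?V x / d)) \<longlonglongrightarrow> sqrt (0 * ?V x / d)"
      using d(1) by (intro tendsto_intros) auto
    thus ?thesis by simp
  qed
  show "(\<lambda>k. mpow F k *v x) \<longlonglongrightarrow> 0"
    by (rule Lim_null_comparison[OF _ lim]) (simp add: bnd)
qed

lemma W_split:
  "y \<bullet> ((Q + transpose K ** R ** K) *v y) = y \<bullet> (Q *v y) + (K *v y) \<bullet> (R *v (K *v (y::real^'n)))"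
  by (simp add: matrix_vector_mult_add_rdistrib inner_add_right qf_sandwich)

lemma W_zero:
  assumes Q: "psd Q" and R: "pos_def R"
    and z: "y \<bullet> ((Q + transpose K ** R ** K) *v y) = 0"
  shows "y \<bullet> (Q *v y) = 0" "K *v y = 0"
proof -
  have a: "0 \<le> y \<bullet> (Q *v y)" using Q by (simp add: psd_def)
  have b: "0 \<le> (K *v y) \<bullet> (R *v (K *v y))" using pos_def_nonneg[OF R] .
  from z have "y \<bullet> (Q *v y) + (K *v y) \<bullet> (R *v (K *v y)) = 0" by (simp add: W_split)
  hence "y \<bullet> (Q *v y) = 0" and b0: "(K *v y) \<bullet> (R *v (K *v y)) = 0" using a b by linarith+
  thus "y \<bullet> (Q *v y) = 0" by simp
  show "K *v y = 0"
  proof (rule ccontr)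
    assume "K *v y \<noteq> 0"
    hence "0 < (K *v y) \<bullet> (R *v (K *v y))" using R by (simp add: pos_def_def)
    thus False using b0 by simp
  qed
qed

lemma W_psd:
  assumes Q: "psd Q" and R: "pos_def R"
  shows "psd (Q + transpose K ** R ** K)"
  unfolding psd_def
proof (intro conjI allI)
  have "transpose R = R" using R by (simp add: pos_def_def)
  moreover have "transpose Q = Q" using Q by (simp add: psd_def)
  ultimately show "transpose (Q + transpose K ** R ** K) = Q + transpose K ** R ** K"
    by (simp add: transpose_add' matrix_transpose_mul matrix_mul_assoc)
  fix x
  show "0 \<le> x \<bullet> ((Q + transpose K ** R ** K) *v x)"
    unfolding W_split using Q pos_def_nonneg[OF R] by (simp add: psd_def add_nonneg_nonneg)
qed

lemma obs_lemma:
  fixes A :: "real^'n^'n" and B :: "real^'m^'n" and K :: "real^'n^'m" and R :: "real^'m^'m"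
  assumes obsv: "observable A (msqrt Q)" and Q: "psd Q" and R: "pos_def R" and s: "s \<noteq> 0"
    and z: "\<forall>k<CARD('n). (mpow (s *\<^sub>R (A - B ** K)) k *v x) \<bullet>
              ((Q + transpose K ** R ** K) *v (mpow (s *\<^sub>R (A - B ** K)) k *v x)) = 0"
  shows "x = 0"
proof -
  let ?M = "s *\<^sub>R (A - B ** K)"
  have Kz: "K *v (mpow ?M k *v x) = 0" if "k < CARD('n)" for k using W_zero(2)[OF Q R] z that by blast
  have Qz: "(mpow ?M k *v x) \<bullet> (Q *v (mpow ?M k *v x)) = 0" if "k < CARD('n)" for k
    using W_zero(1)[OF Q R] z that by blast
  have My: "?M *v y = s *\<^sub>R (A *v y - B *v (K *v y))" for y
    by (simp add: scaleR_mat_vec matrix_vector_mult_diff_rdistrib matrix_vector_mul_assoc)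
  have Mk: "k < CARD('n) \<Longrightarrow> mpow ?M k *v x = s ^ k *\<^sub>R (mpow A k *v x)" for k
  proof (induction k)
    case 0 thus ?case by simp
  next
    case (Suc k)
    hence k: "k < CARD('n)" by simp
    have "mpow ?M (Suc k) *v x = ?M *v (mpow ?M k *v x)" by (simp add: matrix_vector_mul_assoc)
    also have "\<dots> = s *\<^sub>R (A *v (mpow ?M k *v x) - B *v (K *v (mpow ?M k *v x)))"
      by (rule My)
    also have "\<dots> = s *\<^sub>R (A *v (s ^ k *\<^sub>R (mpow A k *v x)))" using Kz[OF k] Suc.IH[OF k] by simp
    also have "\<dots> = s ^ Suc k *\<^sub>R (mpow A (Suc k) *v x)"
      by (simp add: matrix_vector_mult_scaleR matrix_vector_mul_assoc)
    finally show ?case .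
  qed
  have "(msqrt Q ** mpow A k) *v x = 0" if k: "k < CARD('n)" for k
  proof -
    have "msqrt Q *v (mpow ?M k *v x) = 0" by (rule msqrt_kernel[OF Q Qz[OF k]])
    hence "s ^ k *\<^sub>R (msqrt Q *v (mpow A k *v x)) = 0"
      using Mk[OF k] by (simp add: matrix_vector_mult_scaleR)
    hence "msqrt Q *v (mpow A k *v x) = 0" using s by simp
    thus ?thesis by (simp add: matrix_vector_mul_assoc)
  qed
  thus ?thesis using obsv unfolding observable_def by blast
qed

lemma sqrt_less_sq: "0 \<le> (c::real) \<Longrightarrow> c < sqrt a \<Longrightarrow> c^2 < a"
proof -
  assume c: "0 \<le> c" "c < sqrt a"
  hence "0 < sqrt a" by linarith
  hence a: "0 < a" by simp
  have "c^2 < (sqrt a)^2" using c by (intro power_strict_mono) auto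
  thus ?thesis using a by simp
qed

lemma sigma_lemma:
  fixes P QQ :: "real^'n^'n"
  assumes P: "pos_def P" and symQ: "transpose QQ = QQ" and psdQ: "\<And>x. 0 \<le> x \<bullet> (QQ *v x)"
    and inv: "invertible QQ" and c: "0 < c" and cl: "c < sqrt (sigma_min (P ** matrix_inv QQ))"
  shows "\<exists>e>0. \<forall>x. c^2 * (x \<bullet> (QQ *v x)) + e * (x \<bullet> x) \<le> x \<bullet> (P *v x)"
proof -
  have symP: "transpose P = P" using P by (simp add: pos_def_def)
  have injQ: "inj ((*v) QQ)" using inv by (rule inj_matrix_vector_mult)
  have Qpos: "0 < x \<bullet> (QQ *v x)" if x: "x \<noteq> 0" for x
  proof (rule ccontr)
    assume "\<not> 0 < x \<bullet> (QQ *v x)"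
    hence "x \<bullet> (QQ *v x) = 0" using psdQ[of x] by linarith
    hence "QQ *v x = 0" using kernel_lemma[OF symQ subspace_UNIV] psdQ by blast
    hence "x = 0" using injQ by (metis injD matrix_vector_mult_0_right)
    thus False using x by simp
  qed
  have pdQ: "pos_def QQ" using Qpos symQ by (simp add: pos_def_def)
  obtain dQ where dQ: "dQ > 0" "\<And>x. dQ * (x \<bullet> x) \<le> x \<bullet> (QQ *v x)" using pos_def_lower[OF pdQ] by blast
  let ?S = "sphere (0::real^'n) 1"
  let ?rat = "\<lambda>x. (x \<bullet> (P *v x)) / (x \<bullet> (QQ *v x))"
  have nz: "x \<bullet> (QQ *v x) \<noteq> 0" if xS: "x \<in> ?S" for x
  proof -
    have "x \<noteq> 0" using xS by auto
    from Qpos[OF this] show ?thesis by simp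
  qed
  have cont: "continuous_on ?S ?rat"
    using nz by (intro continuous_intros linear_continuous_on) auto
  obtain x0 :: "real^'n" where x0: "norm x0 = 1" using vector_choose_size[of 1] by auto
  hence neS: "?S \<noteq> {}" by auto
  obtain v where v: "v \<in> ?S" and vmin: "\<And>y. y \<in> ?S \<Longrightarrow> ?rat v \<le> ?rat y"
    using continuous_attains_inf[OF compact_sphere neS cont] by blast
  define t where "t = ?rat v"
  have v0: "v \<noteq> 0" using v by auto
  have tpos: "0 < t" unfolding t_def using P v0 Qpos[OF v0] by (simp add: pos_def_def)
  have tle: "t * (x \<bullet> (QQ *v x)) \<le> x \<bullet> (P *v x)" for x
  proof (cases "x = 0")
    case True thus ?thesis by simp
  next
    case False
    let ?y = "x /\<^sub>R norm x"
    have "?y \<in> ?S" using False by simp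
    hence "t \<le> ?rat ?y" using vmin t_def by blast
    also have "?rat ?y = ?rat x"
    proof -
      let ?a = "inverse (norm x) * inverse (norm x)"
      have a0: "?a \<noteq> 0" using False by simp
      have "?rat ?y = (?a * (x \<bullet> (P *v x))) / (?a * (x \<bullet> (QQ *v x)))"
        by (simp add: matrix_vector_mult_scaleR divide_inverse mult.assoc)
      also have "\<dots> = ?rat x" using a0 by (rule mult_divide_mult_cancel_left)
      finally show ?thesis .
    qed
    finally show ?thesis using Qpos[OF False] by (simp add: field_simps)
  qed
  let ?N = "P - t *\<^sub>R QQ"
  have symN: "transpose ?N = ?N" using symP symQ by (simp add: transpose_diff' transpose_scalar)
  have qN: "x \<bullet> (?N *v x) = x \<bullet> (P *v x) - t * (x \<bullet> (QQ *v x))" for x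
    by (simp add: matrix_vector_mult_diff_rdistrib scaleR_mat_vec inner_diff_right)
  have "?N *v v = 0"
  proof (rule kernel_lemma[OF symN subspace_UNIV])
    show "\<And>x. x \<in> UNIV \<Longrightarrow> 0 \<le> x \<bullet> (?N *v x)" using tle qN by simp
    show "v \<bullet> (?N *v v) = 0" unfolding qN using Qpos[OF v0] by (simp add: t_def)
  qed auto
  hence Pv: "P *v v = t *\<^sub>R (QQ *v v)" by (simp add: matrix_vector_mult_diff_rdistrib scaleR_mat_vec)
  define z where "z = QQ *v v"
  have z0: "z \<noteq> 0"
  proof
    assume "z = 0"
    hence "QQ *v v = 0" by (simp add: z_def)
    thus False using injQ v0 by (metis injD matrix_vector_mult_0_right)
  qed
  define Y where "Y = P ** matrix_inv QQ"
  have Yz: "Y *v z = t *\<^sub>R z"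
  proof -
    have "Y *v z = P *v ((matrix_inv QQ ** QQ) *v v)"
      by (simp add: Y_def z_def matrix_vector_mul_assoc matrix_mul_assoc)
    also have "\<dots> = P *v v" using matrix_inv_props(2)[OF inv] by simp
    finally show ?thesis using Pv z_def by simp
  qed
  define Z where "Z = transpose Y ** Y"
  have symZ: "transpose Z = Z" by (simp add: Z_def matrix_transpose_mul)
  have qZ: "x \<bullet> (Z *v x) = (Y *v x) \<bullet> (Y *v x)" for x
    by (simp only: Z_def matrix_vector_mul_assoc[symmetric] dot_tr)
  obtain lam u where lu: "norm u = 1" "Z *v u = lam *\<^sub>R u" "\<forall>x. lam * (x \<bullet> x) \<le> x \<bullet> (Z *v x)"
    using rayleigh_sub[OF symZ subspace_UNIV, of z] z0 by auto
  have "z \<bullet> (Z *v z) = (t * t) * (z \<bullet> z)" using qZ[of z] Yz by simp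
  hence "lam * (z \<bullet> z) \<le> (t * t) * (z \<bullet> z)" using lu(3) by metis
  hence lamt: "lam \<le> t^2" using z0 by (simp add: power2_eq_square)
  let ?E = "{l. \<exists>x. x \<noteq> 0 \<and> (transpose Y ** Y) *v x = l *\<^sub>R x}"
  have finE: "finite ?E" using eig_finite_sym[OF symZ] by (simp add: Z_def)
  have "lam \<in> ?E" using lu(1,2) by (intro CollectI exI[of _ u]) (auto simp: Z_def)
  hence minle: "Min ?E \<le> lam" using finE by (rule Min_le[rotated])
  have sm: "sigma_min Y = sqrt (Min ?E)" by (simp add: sigma_min_def)
  have "c^2 < sigma_min Y" using sqrt_less_sq[of c] c cl by (simp add: Y_def)
  hence "(c^2)^2 < Min ?E" using sqrt_less_sq[of "c^2" "Min ?E"] sm by simp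
  hence "(c^2)^2 < t^2" using minle lamt by linarith
  hence ct: "c^2 < t" using tpos by (smt (verit) power_mono zero_le_power2)
  define e where "e = (t - c^2) * dQ"
  have "e > 0" using ct dQ(1) by (simp add: e_def)
  moreover have "c^2 * (x \<bullet> (QQ *v x)) + e * (x \<bullet> x) \<le> x \<bullet> (P *v x)" for x
  proof -
    have "e * (x \<bullet> x) \<le> (t - c^2) * (x \<bullet> (QQ *v x))"
      unfolding e_def using dQ(2)[of x] ct by (simp add: mult.assoc mult_left_mono)
    thus ?thesis using tle[of x] by (simp add: algebra_simps)
  qed
  ultimately show ?thesis by blast
qed



lemma lyap_conv:
  fixes G X W :: "real^'n^'n"
  assumes g: "0 < g"
  shows "(g *\<^sub>R (transpose G ** X ** G) - X + W = 0) \<longleftrightarrow> lyapL (sqrt g *\<^sub>R G) X = W"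
proof -
  have "transpose (sqrt g *\<^sub>R G) ** X ** (sqrt g *\<^sub>R G) = (sqrt g * sqrt g) *\<^sub>R (transpose G ** X ** G)"
    by (simp add: transpose_scalar matrix_scalar_ac scalar_matrix_assoc)
  also have "sqrt g * sqrt g = g" using g by simp
  finally have e: "transpose (sqrt g *\<^sub>R G) ** X ** (sqrt g *\<^sub>R G) = g *\<^sub>R (transpose G ** X ** G)" .
  show ?thesis unfolding lyapL_def e by (auto simp: algebra_simps)
qed

lemma solve_lemma:
  fixes A :: "real^'n^'n" and B :: "real^'m^'n" and K :: "real^'n^'m" and R :: "real^'m^'m"
  assumes obsv: "observable A (msqrt Q)" and Q: "psd Q" and R: "pos_def R" and g: "0 < g"
    and st: "mstable (sqrt g *\<^sub>R (A - B ** K))"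
  shows "\<exists>X. pos_def X \<and> g *\<^sub>R (transpose (A - B ** K) ** X ** (A - B ** K)) - X + (Q + transpose K ** R ** K) = 0"
    "\<And>X Y. g *\<^sub>R (transpose (A - B ** K) ** X ** (A - B ** K)) - X + (Q + transpose K ** R ** K) = 0 \<Longrightarrow>
           g *\<^sub>R (transpose (A - B ** K) ** Y ** (A - B ** K)) - Y + (Q + transpose K ** R ** K) = 0 \<Longrightarrow> X = Y"
proof -
  let ?M = "sqrt g *\<^sub>R (A - B ** K)"
  let ?W = "Q + transpose K ** R ** K"
  obtain X where X: "lyapL ?M X = ?W" using lyap_exists[OF st] by blast
  have "pos_def X"
  proof (rule lyap_posdef[OF st W_psd[OF Q R] X])
    fix x assume "\<forall>k<CARD('n). (mpow ?M k *v x) \<bullet> (?W *v (mpow ?M k *v x)) = 0"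
    thus "x = 0" using obs_lemma[OF obsv Q R, of "sqrt g" B K x] g by simp
  qed
  thus "\<exists>X. pos_def X \<and> g *\<^sub>R (transpose (A - B ** K) ** X ** (A - B ** K)) - X + ?W = 0"
    using X lyap_conv[OF g] by blast
  fix X Y
  assume "g *\<^sub>R (transpose (A - B ** K) ** X ** (A - B ** K)) - X + ?W = 0"
    "g *\<^sub>R (transpose (A - B ** K) ** Y ** (A - B ** K)) - Y + ?W = 0"
  hence XY: "lyapL ?M X = ?W" "lyapL ?M Y = ?W" using lyap_conv[OF g] by blast+
  have "lyapL ?M (X - Y) = lyapL ?M X - lyapL ?M Y" by (rule linear_diff[OF lyapL_linear])
  hence "lyapL ?M (X - Y) = 0" using XY by simp
  hence "X - Y = 0" by (rule lyap_uniq0[OF st])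
  thus "X = Y" by simp
qed

lemma dot_vm: "d \<bullet> (z v* B) = ((B::real^'n^'m) *v d) \<bullet> z"
  by (metis dot_lmul_matrix inner_commute)

lemma transpose_zero': "transpose (0::real^'n^'m) = 0"
  by (simp add: transpose_def vec_eq_iff)

lemma transpose_sum': "transpose (sum f S) = (\<Sum>i\<in>S. transpose (f i :: real^'n^'m))"
  by (induction S rule: infinite_finite_induct) (simp_all add: transpose_zero' transpose_add')

lemma step_stable:
  fixes A :: "real^'n^'n" and B :: "real^'m^'n" and K K' :: "real^'n^'m" and R :: "real^'m^'m"
    and P Q :: "real^'n^'n"
  assumes Q: "psd Q" and R: "pos_def R" and obsv: "observable A (msqrt Q)" and P: "pos_def P"
    and g: "0 < g"
    and eq: "g *\<^sub>R (transpose (A - B ** K) ** P ** (A - B ** K)) - P + Q + transpose K ** R ** K = 0"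
    and K': "K' = matrix_inv (transpose B ** P ** B + (1/g) *\<^sub>R R) ** transpose B ** P ** A"
    and cc: "(\<not> invertible (P - Q - transpose K' ** R ** K') \<longrightarrow> c' = 1) \<and>
             (invertible (P - Q - transpose K' ** R ** K') \<longrightarrow> 1 < c' \<and>
                c' < sqrt (sigma_min (P ** matrix_inv (P - Q - transpose K' ** R ** K'))))"
  shows "mstable (sqrt (g * c'^2) *\<^sub>R (A - B ** K'))"
proof -
  have symP: "transpose P = P" using P by (simp add: pos_def_def)
  have symQ: "transpose Q = Q" using Q by (simp add: psd_def)
  have symR: "transpose R = R" using R by (simp add: pos_def_def)
  define H where "H = transpose B ** P ** B + (1/g) *\<^sub>R R"
  have Hq: "x \<bullet> (H *v x) = (B *v x) \<bullet> (P *v (B *v x)) + (1/g) * (x \<bullet> (R *v x))" for x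
    by (simp add: H_def matrix_vector_mult_add_rdistrib scaleR_mat_vec inner_add_right qf_sandwich)
  have Hinv: "invertible H"
  proof -
    have "\<forall>x. H *v x = 0 \<longrightarrow> x = 0"
    proof (intro allI impI)
      fix x assume Hx: "H *v x = 0"
      show "x = 0"
      proof (rule ccontr)
        assume x: "x \<noteq> 0"
        have "0 < x \<bullet> (R *v x)" using R x by (simp add: pos_def_def)
        hence "0 < (1/g) * (x \<bullet> (R *v x))" using g by simp
        moreover have "0 \<le> (B *v x) \<bullet> (P *v (B *v x))" by (rule pos_def_nonneg[OF P])
        ultimately have "0 < x \<bullet> (H *v x)" unfolding Hq by linarith
        thus False using Hx by simp
      qed
    qed
    thus ?thesis using invertible_left_inverse matrix_left_invertible_ker by blast
  qed
  have HK: "H ** K' = transpose B ** P ** A"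
    unfolding K' H_def[symmetric] by (simp add: matrix_mul_assoc matrix_inv_props(1)[OF Hinv])
  define QQ where "QQ = P - Q - transpose K' ** R ** K'"
  define F where "F = A - B ** K'"
  have QQq: "x \<bullet> (QQ *v x) = x \<bullet> (P *v x) - x \<bullet> (Q *v x) - (K' *v x) \<bullet> (R *v (K' *v x))" for x
    by (simp add: QQ_def matrix_vector_mult_diff_rdistrib inner_diff_right qf_sandwich)
  have symQQ: "transpose QQ = QQ"
    using symP symQ symR by (simp add: QQ_def transpose_diff' matrix_transpose_mul matrix_mul_assoc)
  have key: "g * ((F *v x) \<bullet> (P *v (F *v x))) \<le> x \<bullet> (QQ *v x)" for x
  proof -
    define y where "y = A *v x"
    define u where "u = K *v x"
    define u' where "u' = K' *v x"
    define d where "d = u - u'"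
    define f where "f = y - B *v u'"
    have Fx: "F *v x = f" by (simp add: F_def f_def y_def u'_def matrix_vector_mult_diff_rdistrib matrix_vector_mul_assoc)
    have Gx: "(A - B ** K) *v x = f - B *v d"
      by (simp add: f_def y_def d_def u_def u'_def matrix_vector_mult_diff_rdistrib matrix_vector_mult_diff_distrib matrix_vector_mul_assoc)
    have Gx2: "A *v x - (B ** K) *v x = f - B *v d" using Gx by (simp add: matrix_vector_mult_diff_rdistrib)
    have E0: "g * ((f - B *v d) \<bullet> (P *v (f - B *v d))) - x \<bullet> (P *v x) + x \<bullet> (Q *v x) + u \<bullet> (R *v u) = 0"
    proof -
      have "x \<bullet> ((g *\<^sub>R (transpose (A - B ** K) ** P ** (A - B ** K)) - P + Q + transpose K ** R ** K) *v x) = 0"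
        using eq by simp
      thus ?thesis
        by (simp add: matrix_vector_mult_add_rdistrib matrix_vector_mult_diff_rdistrib scaleR_mat_vec
            inner_add_right inner_diff_right qf_sandwich Gx2 u_def)
    qed
    have E1: "(f - B *v d) \<bullet> (P *v (f - B *v d)) = f \<bullet> (P *v f) - 2 * ((B *v d) \<bullet> (P *v f)) + (B *v d) \<bullet> (P *v (B *v d))"
    proof -
      have "f \<bullet> (P *v (B *v d)) = (B *v d) \<bullet> (P *v f)"
        using sym_dot[OF symP, of f "B *v d"] by (simp add: inner_commute)
      thus ?thesis by (simp add: matrix_vector_mult_diff_distrib inner_diff_left inner_diff_right)
    qed
    have E2: "u \<bullet> (R *v u) = u' \<bullet> (R *v u') + 2 * (d \<bullet> (R *v u')) + d \<bullet> (R *v d)"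
    proof -
      have u: "u = u' + d" by (simp add: d_def)
      have "u' \<bullet> (R *v d) = d \<bullet> (R *v u')"
        using sym_dot[OF symR, of u' d] by (simp add: inner_commute)
      thus ?thesis unfolding u by (simp add: matrix_vector_right_distrib inner_add_left inner_add_right)
    qed
    have E3: "d \<bullet> (R *v u') = g * ((B *v d) \<bullet> (P *v f))"
    proof -
      have "H *v u' = transpose B *v (P *v y)"
        using HK by (simp add: u'_def y_def matrix_vector_mul_assoc matrix_mul_assoc)
      hence "d \<bullet> (H *v u') = d \<bullet> (transpose B *v (P *v y))" by simp
      hence "(B *v d) \<bullet> (P *v (B *v u')) + (1/g) * (d \<bullet> (R *v u')) = (B *v d) \<bullet> (P *v y)"
        by (simp add: H_def matrix_vector_mult_add_rdistrib scaleR_mat_vec inner_add_right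
            dot_vm matrix_vector_mul_assoc[symmetric])
      hence "(1/g) * (d \<bullet> (R *v u')) = (B *v d) \<bullet> (P *v f)"
        by (simp add: f_def matrix_vector_mult_diff_distrib inner_diff_right)
      thus ?thesis using g by (simp add: field_simps)
    qed
    have n1: "0 \<le> (B *v d) \<bullet> (P *v (B *v d))" by (rule pos_def_nonneg[OF P])
    have n2: "0 \<le> d \<bullet> (R *v d)" by (rule pos_def_nonneg[OF R])
    have E1g: "g * ((f - B *v d) \<bullet> (P *v (f - B *v d))) = g * (f \<bullet> (P *v f)) - 2 * (g * ((B *v d) \<bullet> (P *v f))) + g * ((B *v d) \<bullet> (P *v (B *v d)))"
      unfolding E1 by (simp add: algebra_simps)
    have "0 \<le> g * ((B *v d) \<bullet> (P *v (B *v d)))" using g n1 by simp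
    hence "g * (f \<bullet> (P *v f)) \<le> x \<bullet> (P *v x) - x \<bullet> (Q *v x) - u' \<bullet> (R *v u')"
      using E0 E1g E2 E3 n2 by linarith
    thus ?thesis unfolding QQq Fx u'_def .
  qed
  have QQpsd: "0 \<le> x \<bullet> (QQ *v x)" for x
  proof -
    have "0 \<le> g * ((F *v x) \<bullet> (P *v (F *v x)))" using g pos_def_nonneg[OF P] by simp
    thus ?thesis using key[of x] by linarith
  qed
  let ?M = "sqrt (g * c'^2) *\<^sub>R F"
  let ?V = "\<lambda>y. y \<bullet> (P *v y)"
  have VM: "?V (?M *v x) = (g * c'^2) * ((F *v x) \<bullet> (P *v (F *v x)))" for x
  proof -
    have "?V (?M *v x) = (sqrt (g * c'^2) * sqrt (g * c'^2)) * ((F *v x) \<bullet> (P *v (F *v x)))"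
      by (simp add: scaleR_mat_vec matrix_vector_mult_scaleR)
    also have "sqrt (g * c'^2) * sqrt (g * c'^2) = g * c'^2" using g by simp
    finally show ?thesis .
  qed
  obtain m where m: "m > 0" "\<And>x. ?V x \<le> m * (x \<bullet> x)" using psd_upper[of P] by blast
  have V0: "\<And>y. 0 \<le> ?V y" using pos_def_nonneg[OF P] .
  show ?thesis unfolding F_def[symmetric]
  proof (cases "invertible QQ")
    case True
    with cc have c': "1 < c'" "c' < sqrt (sigma_min (P ** matrix_inv QQ))" unfolding QQ_def by auto
    obtain e where e: "e > 0" "\<And>x. c'^2 * (x \<bullet> (QQ *v x)) + e * (x \<bullet> x) \<le> ?V x"
      using sigma_lemma[OF P symQQ QQpsd True _ c'(2)] c'(1) by auto
    have dec: "?V (?M *v x) \<le> ?V x - e * (x \<bullet> x)" for x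
    proof -
      have "?V (?M *v x) = c'^2 * (g * ((F *v x) \<bullet> (P *v (F *v x))))" unfolding VM by (simp add: algebra_simps)
      also have "\<dots> \<le> c'^2 * (x \<bullet> (QQ *v x))" using key[of x] by (intro mult_left_mono) auto
      finally show ?thesis using e(2)[of x] by linarith
    qed
    show "mstable ?M"
    proof (rule stable_decay[OF P _ _ _, of _ 1 "1 - e / m"])
      fix x
      show "?V (?M *v x) \<le> ?V x" using dec[of x] e(1) by (smt (verit) inner_ge_zero mult_nonneg_nonneg)
      have "?V (?M *v x) \<le> ?V x - e * (x \<bullet> x)" by (rule dec)
      also have "\<dots> \<le> (1 - e / m) * ?V x"
      proof -
        have "(e / m) * ?V x \<le> (e / m) * (m * (x \<bullet> x))" using m(2)[of x] e(1) m(1) by (intro mult_left_mono) auto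
        also have "\<dots> = e * (x \<bullet> x)" using m(1) by simp
        finally show ?thesis by (simp add: algebra_simps)
      qed
      finally show "?V (mpow ?M 1 *v x) \<le> (1 - e / m) * ?V x" by simp
    qed (use e(1) m(1) in auto)
  next
    case False
    with cc have c'1: "c' = 1" unfolding QQ_def by auto
    let ?W = "Q + transpose K' ** R ** K'"
    have Mg: "?M = sqrt g *\<^sub>R F" using c'1 by simp
    have Wq: "x \<bullet> (?W *v x) = x \<bullet> (Q *v x) + (K' *v x) \<bullet> (R *v (K' *v x))" for x by (rule W_split)
    have W0: "0 \<le> x \<bullet> (?W *v x)" for x using W_psd[OF Q R, of K'] by (simp add: psd_def)
    have dec1: "?V (?M *v x) \<le> ?V x - x \<bullet> (?W *v x)" for x
      using key[of x] VM[of x] c'1 unfolding QQq Wq by simp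
    have iter: "?V (mpow ?M k *v x) \<le> ?V x - (\<Sum>j<k. (mpow ?M j *v x) \<bullet> (?W *v (mpow ?M j *v x)))" for k x
    proof (induction k)
      case 0 thus ?case by simp
    next
      case (Suc k)
      have "?V (mpow ?M (Suc k) *v x) = ?V (?M *v (mpow ?M k *v x))" by (simp add: matrix_vector_mul_assoc)
      also have "\<dots> \<le> ?V (mpow ?M k *v x) - (mpow ?M k *v x) \<bullet> (?W *v (mpow ?M k *v x))" by (rule dec1)
      finally show ?case using Suc by simp
    qed
    define Z where "Z = (\<Sum>j<CARD('n). transpose (mpow ?M j) ** ?W ** mpow ?M j)"
    have Zq: "x \<bullet> (Z *v x) = (\<Sum>j<CARD('n). (mpow ?M j *v x) \<bullet> (?W *v (mpow ?M j *v x)))" for x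
      by (simp add: Z_def sum_mat_vec inner_sum_right qf_sandwich)
    have symW: "transpose ?W = ?W" using W_psd[OF Q R, of K'] by (simp add: psd_def)
    have symZ: "transpose Z = Z"
      unfolding Z_def transpose_sum' by (simp add: matrix_transpose_mul symW matrix_mul_assoc)
    have Zpd: "pos_def Z"
      unfolding pos_def_def
    proof (intro conjI symZ allI impI)
      fix x :: "real^'n" assume x: "x \<noteq> 0"
      have "0 \<le> x \<bullet> (Z *v x)" unfolding Zq using W0 by (intro sum_nonneg) auto
      moreover have "x \<bullet> (Z *v x) \<noteq> 0"
      proof
        assume "x \<bullet> (Z *v x) = 0"
        hence "\<forall>j<CARD('n). (mpow ?M j *v x) \<bullet> (?W *v (mpow ?M j *v x)) = 0"
          unfolding Zq using W0 by (subst (asm) sum_nonneg_eq_0_iff) auto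
        hence "\<forall>j<CARD('n). (mpow (sqrt g *\<^sub>R (A - B ** K')) j *v x) \<bullet> (?W *v (mpow (sqrt g *\<^sub>R (A - B ** K')) j *v x)) = 0"
          using c'1 by (simp add: F_def)
        hence "x = 0" using obs_lemma[OF obsv Q R, of "sqrt g" B K' x] g by simp
        thus False using x by simp
      qed
      ultimately show "0 < x \<bullet> (Z *v x)" by simp
    qed
    obtain e where e: "e > 0" "\<And>x. e * (x \<bullet> x) \<le> x \<bullet> (Z *v x)" using pos_def_lower[OF Zpd] by blast
    show "mstable ?M"
    proof (rule stable_decay[OF P _ _ _, of _ "CARD('n)" "1 - e / m"])
      fix x
      show "?V (?M *v x) \<le> ?V x" using dec1[of x] W0[of x] by linarith
      have "?V (mpow ?M CARD('n) *v x) \<le> ?V x - x \<bullet> (Z *v x)" using iter[of "CARD('n)" x] Zq[of x] by simp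
      also have "\<dots> \<le> ?V x - e * (x \<bullet> x)" using e(2)[of x] by linarith
      also have "\<dots> \<le> (1 - e / m) * ?V x"
      proof -
        have "(e / m) * ?V x \<le> (e / m) * (m * (x \<bullet> x))" using m(2)[of x] e(1) m(1) by (intro mult_left_mono) auto
        also have "\<dots> = e * (x \<bullet> x)" using m(1) by simp
        finally show ?thesis by (simp add: algebra_simps)
      qed
      finally show "?V (mpow ?M CARD('n) *v x) \<le> (1 - e / m) * ?V x" .
    qed (use e(1) m(1) in auto)
  qed
qed



lemma base_stable: "b > spectral_radius (G::real^'n^'n) \<Longrightarrow> 0 < b \<and> mstable ((1/b) *\<^sub>R G)"
  using base_stable_aux[of G b] unfolding mstable_def by blast

lemma lyap_eq_iff:
  "lyap_eq A B Q R b c j K X \<longleftrightarrow>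
   ((\<Prod>l\<le>j. (c l)^2) / b^2) *\<^sub>R (transpose (A - B ** K) ** X ** (A - B ** K)) - X + (Q + transpose K ** R ** K) = 0"
  unfolding lyap_eq_def by (simp add: add.assoc)

theorem theorem2:
  fixes A :: "real^'n^'n" and B :: "real^'m^'n" and Q :: "real^'n^'n" and R :: "real^'m^'m"
    and K :: "nat \<Rightarrow> real^'n^'m" and P :: "nat \<Rightarrow> real^'n^'n" and c :: "nat \<Rightarrow> real"
    and b :: real and i :: nat
  assumes Q: "psd Q" and R: "pos_def R"
    and ctrb: "controllable A B" and obsv: "observable A (msqrt Q)"
    and c0: "c 0 = 1"
    and b: "b > spectral_radius (A - B ** K 0)"
    and Psol: "\<forall>j\<le>i. lyap_eq A B Q R b c j (K j) (P j)"
    and Kupd: "\<forall>j\<le>i. K (Suc j) =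
                 matrix_inv (transpose B ** P j ** B + (b^2 / (\<Prod>l\<le>j. (c l)^2)) *\<^sub>R R)
                 ** transpose B ** P j ** A"
    and cupd: "\<forall>j\<le>i. (let Qj = P j - Q - transpose (K (Suc j)) ** R ** K (Suc j) in
                 (\<not> invertible Qj \<longrightarrow> c (Suc j) = 1) \<and>
                 (invertible Qj \<longrightarrow> 1 < c (Suc j) \<and>
                     c (Suc j) < sqrt (sigma_min (P j ** matrix_inv Qj))))"
  shows "\<exists>!X. pos_def X \<and> lyap_eq A B Q R b c (Suc i) (K (Suc i)) X"
proof -
  define pr where "pr j = (\<Prod>l\<le>j. (c l)^2)" for j
  have bst: "0 < b" "mstable ((1/b) *\<^sub>R (A - B ** K 0))" using base_stable[OF b] by auto
  have cnz: "c l \<noteq> 0" if "l \<le> Suc i" for l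
  proof (cases l)
    case 0 thus ?thesis using c0 by simp
  next
    case (Suc l')
    hence "l' \<le> i" using that by simp
    hence "c (Suc l') = 1 \<or> 1 < c (Suc l')" using cupd by (auto simp: Let_def)
    thus ?thesis using Suc by auto
  qed
  have prpos: "0 < pr j" if "j \<le> Suc i" for j
    unfolding pr_def using cnz that by (intro prod_pos) auto
  have gpos: "0 < pr j / b^2" if "j \<le> Suc i" for j using prpos[OF that] bst(1) by simp
  have solve: "(\<exists>X. pos_def X \<and> lyap_eq A B Q R b c j (K j) X) \<and>
               (\<forall>X Y. lyap_eq A B Q R b c j (K j) X \<longrightarrow> lyap_eq A B Q R b c j (K j) Y \<longrightarrow> X = Y)"
    if j: "j \<le> Suc i" and st: "mstable (sqrt (pr j / b^2) *\<^sub>R (A - B ** K j))" for j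
    using solve_lemma[OF obsv Q R gpos[OF j] st] unfolding lyap_eq_iff pr_def by blast
  have step: "mstable (sqrt (pr (Suc j) / b^2) *\<^sub>R (A - B ** K (Suc j)))"
    if j: "j \<le> i" and Pj: "pos_def (P j)" for j
  proof -
    have g: "0 < pr j / b^2" using gpos j by simp
    have eq: "(pr j / b^2) *\<^sub>R (transpose (A - B ** K j) ** P j ** (A - B ** K j)) - P j + Q
              + transpose (K j) ** R ** K j = 0"
    proof -
      have "lyap_eq A B Q R b c j (K j) (P j)" using Psol j by simp
      thus ?thesis unfolding lyap_eq_def pr_def .
    qed
    have inv: "1 / (pr j / b^2) = b^2 / pr j" by simp
    have K': "K (Suc j) = matrix_inv (transpose B ** P j ** B + (1 / (pr j / b^2)) *\<^sub>R R) ** transpose B ** P j ** A"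
    proof -
      have "K (Suc j) = matrix_inv (transpose B ** P j ** B + (b^2 / (\<Prod>l\<le>j. (c l)^2)) *\<^sub>R R) ** transpose B ** P j ** A"
        using Kupd j by simp
      thus ?thesis unfolding inv unfolding pr_def .
    qed
    have cc: "(\<not> invertible (P j - Q - transpose (K (Suc j)) ** R ** K (Suc j)) \<longrightarrow> c (Suc j) = 1) \<and>
             (invertible (P j - Q - transpose (K (Suc j)) ** R ** K (Suc j)) \<longrightarrow> 1 < c (Suc j) \<and>
                c (Suc j) < sqrt (sigma_min (P j ** matrix_inv (P j - Q - transpose (K (Suc j)) ** R ** K (Suc j)))))"
      using cupd j by (simp add: Let_def)
    have st: "mstable (sqrt (pr j / b^2 * (c (Suc j))^2) *\<^sub>R (A - B ** K (Suc j)))"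
      by (rule step_stable[OF Q R obsv Pj g eq K' cc])
    have e: "pr j / b^2 * (c (Suc j))^2 = pr (Suc j) / b^2"
      by (simp add: pr_def)
    show ?thesis using st unfolding e .
  qed
  have PD: "pos_def (P j)" if "j \<le> i" for j
    using that
  proof (induction j)
    case 0
    have "sqrt (pr 0 / b^2) = 1 / b" using c0 bst(1) by (simp add: pr_def real_sqrt_divide)
    hence "mstable (sqrt (pr 0 / b^2) *\<^sub>R (A - B ** K 0))" using bst(2) by simp
    from solve[OF _ this] obtain X where X: "pos_def X" "lyap_eq A B Q R b c 0 (K 0) X"
      and u: "\<forall>X Y. lyap_eq A B Q R b c 0 (K 0) X \<longrightarrow> lyap_eq A B Q R b c 0 (K 0) Y \<longrightarrow> X = Y" by auto
    have "lyap_eq A B Q R b c 0 (K 0) (P 0)" using Psol by simp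
    hence "P 0 = X" using u X(2) by simp
    thus ?case using X(1) by simp
  next
    case (Suc j)
    hence "pos_def (P j)" by simp
    from step[OF _ this] Suc.prems have "mstable (sqrt (pr (Suc j) / b^2) *\<^sub>R (A - B ** K (Suc j)))" by simp
    from solve[OF _ this] Suc.prems obtain X where X: "pos_def X" "lyap_eq A B Q R b c (Suc j) (K (Suc j)) X"
      and u: "\<forall>X Y. lyap_eq A B Q R b c (Suc j) (K (Suc j)) X \<longrightarrow> lyap_eq A B Q R b c (Suc j) (K (Suc j)) Y \<longrightarrow> X = Y"
      by auto
    have "lyap_eq A B Q R b c (Suc j) (K (Suc j)) (P (Suc j))" using Psol Suc.prems by simp
    hence "P (Suc j) = X" using u X(2) by simp
    thus ?case using X(1) by simp
  qed
  have "mstable (sqrt (pr (Suc i) / b^2) *\<^sub>R (A - B ** K (Suc i)))" using step[OF _ PD] by simp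
  from solve[OF _ this] show ?thesis by blast
qed

end
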